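(* Fix an integer $1\le k<\infty$ and a real $0<\alpha<\infty$. Let $\beta=\beta_n\ge0$ with $n\beta_n\to0$, and let $(\delta_n)$ be a positive sequence with $\log(\delta_n)/\log n\to0$. Set $b_n=\sqrt{2\log n}-\frac{\log\log n+2\log\delta_n+\log(4\pi)}{2\sqrt{2\log n}}$. Then, as $n\to\infty$, $$\frac{Z_{n-k,\alpha,\beta}}{Z_{n,\alpha,\beta}}=(1+o(1))\,(2\pi)^{-k/2}\alpha^{k/2},\qquad \frac{Z_{n-k,\alpha-\frac{k\beta}{4b_n^2},\beta}}{Z_{n-k,\alpha,\beta}}=1+o(1).$$
   Context: For $\alpha>0$, $\beta\ge0$, $m\ge1$, $Z_{m,\alpha,\beta}=\int_{\mathbb{R}^m}\exp(-\frac{\alpha}{2}\sum_{i=1}^m\lambda_i^2)\prod_{1\le i<j\le m}|\lambda_i-\lambda_j|^\beta\prod_{i=1}^m\mathrm{d}\lambda_i$ (for large $n$, $\alpha-\frac{k\beta}{4b_n^2}>0$ so the second partition function is defined). *)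

theory Defs
  imports "HOL-Probability.Probability"
begin

definition Zpart :: "nat \<Rightarrow> real \<Rightarrow> real \<Rightarrow> real" where
  "Zpart m \<alpha> \<beta> =
     (LINT l | PiM {..<m} (\<lambda>_. lborel).
        exp (- (\<alpha> / 2) * (\<Sum>i<m. (l i)\<^sup>2)) *
        (\<Prod>p\<in>{(i, j). i < j \<and> j < m}. \<bar>l (fst p) - l (snd p)\<bar> powr \<beta>))"

definition bseq :: "(nat \<Rightarrow> real) \<Rightarrow> nat \<Rightarrow> real" where
  "bseq \<delta> n = sqrt (2 * ln (real n)) -
     (ln (ln (real n)) + 2 * ln (\<delta> n) + ln (4 * pi)) / (2 * sqrt (2 * ln (real n)))"

end

theory Submission
  imports Defs
begin


definition pairs :: "nat \<Rightarrow> (nat \<times> nat) set" where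
  "pairs m = {(i, j). i < j \<and> j < m}"

definition FF :: "nat \<Rightarrow> real \<Rightarrow> real \<Rightarrow> (nat \<Rightarrow> real) \<Rightarrow> real" where
  "FF m a b l = exp (- (a / 2) * (\<Sum>i<m. (l i)\<^sup>2)) *
        (\<Prod>p\<in>pairs m. \<bar>l (fst p) - l (snd p)\<bar> powr b)"

definition NN :: "nat \<Rightarrow> real \<Rightarrow> real \<Rightarrow> ennreal" where
  "NN m a b = (\<integral>\<^sup>+ l. ennreal (FF m a b l) \<partial>PiM {..<m} (\<lambda>_. lborel))"

lemma pairs_finite[simp]: "finite (pairs m)"
  by (rule finite_subset[of _ "{..<m} \<times> {..<m}"]) (auto simp: pairs_def)

lemma FF_nonneg: "0 \<le> FF m a b l"
  unfolding FF_def by (intro mult_nonneg_nonneg prod_nonneg) auto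

lemma FF_meas[measurable]: "FF m a b \<in> borel_measurable (PiM {..<m} (\<lambda>_. lborel))"
proof -
  have c: "(\<lambda>l. l i) \<in> borel_measurable (PiM {..<m} (\<lambda>_. lborel))" if "i < m" for i
    using measurable_component_singleton[of i "{..<m}" "\<lambda>_. lborel"] that by simp
  have "(\<lambda>l. \<Prod>p\<in>pairs m. \<bar>l (fst p) - l (snd p)\<bar> powr b) \<in> borel_measurable (PiM {..<m} (\<lambda>_. lborel))"
  proof (rule borel_measurable_prod)
    fix p assume "p \<in> pairs m"
    then have "fst p < m" "snd p < m" by (auto simp: pairs_def)
    from c[OF this(1)] c[OF this(2)] show "(\<lambda>l. \<bar>l (fst p) - l (snd p)\<bar> powr b) \<in> borel_measurable (PiM {..<m} (\<lambda>_. lborel))"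
      by measurable
  qed
  moreover have s: "(\<lambda>l::nat\<Rightarrow>real. \<Sum>i<m. (l i)\<^sup>2) \<in> borel_measurable (PiM {..<m} (\<lambda>_. lborel))"
  proof (rule borel_measurable_sum)
    fix i assume "i \<in> {..<m}"
    then have "(\<lambda>l::nat\<Rightarrow>real. l i) \<in> borel_measurable (PiM {..<m} (\<lambda>_. lborel))" using c[of i] by simp
    then show "(\<lambda>l::nat\<Rightarrow>real. (l i)\<^sup>2) \<in> borel_measurable (PiM {..<m} (\<lambda>_. lborel))"
      by (rule borel_measurable_power)
  qed
  ultimately show ?thesis unfolding FF_def[abs_def]
    by (intro borel_measurable_times measurable_compose[OF borel_measurable_times[OF borel_measurable_const s] borel_measurable_exp])
qed

lemma Zpart_NN: "Zpart m a b = enn2real (NN m a b)"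
  unfolding Zpart_def NN_def
  apply (subst integral_eq_nn_integral)
  using FF_meas[of m a b] FF_nonneg[of m a b] by (auto simp: FF_def[abs_def] pairs_def)


definition gg :: "real \<Rightarrow> real \<Rightarrow> real" where "gg a y = exp (- (a / 2) * y\<^sup>2)"
definition QQ :: "nat \<Rightarrow> real \<Rightarrow> (nat \<Rightarrow> real) \<Rightarrow> real \<Rightarrow> real" where
  "QQ m b x y = (\<Prod>i<m. \<bar>x i - y\<bar> powr b)"

lemma pairs_Suc: "pairs (Suc m) = pairs m \<union> (\<lambda>i. (i, m)) ` {..<m}"
  by (auto simp: pairs_def less_Suc_eq)

lemma FF_Suc: "FF (Suc m) a b (x(m := y)) = FF m a b x * (gg a y * QQ m b x y)"
proof -
  have s: "(\<Sum>i<Suc m. ((x(m := y)) i)\<^sup>2) = (\<Sum>i<m. (x i)\<^sup>2) + y\<^sup>2"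
    by (simp add: sum.lessThan_Suc)
  have d: "pairs m \<inter> (\<lambda>i. (i, m)) ` {..<m} = {}" by (auto simp: pairs_def)
  have p: "(\<Prod>p\<in>pairs (Suc m). \<bar>(x(m := y)) (fst p) - (x(m := y)) (snd p)\<bar> powr b)
     = (\<Prod>p\<in>pairs m. \<bar>x (fst p) - x (snd p)\<bar> powr b) * QQ m b x y"
    unfolding pairs_Suc
    apply (subst prod.union_disjoint)
       apply (auto simp: d)[3]
    apply (subst prod.reindex)
     apply (auto simp: inj_on_def QQ_def intro!: arg_cong2[where f="(*)"] prod.cong)
     apply (auto simp: pairs_def)
    done
  show ?thesis unfolding FF_def s p gg_def
    by (simp add: algebra_simps exp_add[symmetric])
qed

lemma psf: "product_sigma_finite (\<lambda>_. lborel)"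
  by (simp add: product_sigma_finite_def lborel.sigma_finite_measure_axioms)

lemma QQ_meas[measurable]: "(\<lambda>y. QQ m b x y) \<in> borel_measurable borel"
  unfolding QQ_def by measurable

lemma gg_meas[measurable]: "gg a \<in> borel_measurable borel"
  unfolding gg_def[abs_def] by measurable

lemma NN_Suc: "NN (Suc m) a b =
  (\<integral>\<^sup>+ x. ennreal (FF m a b x) * (\<integral>\<^sup>+ y. ennreal (gg a y * QQ m b x y) \<partial>lborel) \<partial>PiM {..<m} (\<lambda>_. lborel))"
proof -
  have "NN (Suc m) a b = (\<integral>\<^sup>+ x. (\<integral>\<^sup>+ y. ennreal (FF (Suc m) a b (x(m := y))) \<partial>lborel) \<partial>PiM {..<m} (\<lambda>_. lborel))"
    unfolding NN_def lessThan_Suc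
    apply (rule product_sigma_finite.product_nn_integral_insert[OF psf])
    using FF_meas[of "Suc m" a b] by (auto simp: lessThan_Suc)
  also have "\<dots> = (\<integral>\<^sup>+ x. ennreal (FF m a b x) * (\<integral>\<^sup>+ y. ennreal (gg a y * QQ m b x y) \<partial>lborel) \<partial>PiM {..<m} (\<lambda>_. lborel))"
    apply (rule nn_integral_cong)
    apply (simp only: FF_Suc ennreal_mult' FF_nonneg)
    apply (rule nn_integral_cmult)
    by measurable
  finally show ?thesis .
qed



lemma G_meas:
  fixes f :: "(nat \<Rightarrow> real) \<Rightarrow> ennreal" and i :: nat and I :: "nat set"
  assumes f: "f \<in> borel_measurable (PiM (insert i I) (\<lambda>_. lborel))"
  shows "(\<lambda>x. \<integral>\<^sup>+ y. f (x(i := y)) \<partial>lborel) \<in> borel_measurable (PiM I (\<lambda>_. lborel))"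
proof -
  have "(\<lambda>(x, y). f (x(i := y))) \<in> borel_measurable (PiM I (\<lambda>_. lborel) \<Otimes>\<^sub>M lborel)"
    using measurable_comp[OF measurable_add_dim[of i I "\<lambda>_. lborel"] f]
    by (simp add: comp_def case_prod_beta')
  then show ?thesis
    using lborel.borel_measurable_nn_integral[of "\<lambda>x y. f (x(i := y))"] by simp
qed

lemma PiM_scale:
  fixes f :: "(nat \<Rightarrow> real) \<Rightarrow> ennreal" and c :: real and I :: "nat set"
  assumes "finite I" "0 < c" "f \<in> borel_measurable (PiM I (\<lambda>_. lborel))"
  shows "(\<integral>\<^sup>+ x. f x \<partial>PiM I (\<lambda>_. lborel)) =
    ennreal (c ^ card I) * (\<integral>\<^sup>+ u. f (\<lambda>i\<in>I. c * u i) \<partial>PiM I (\<lambda>_. lborel))"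
  using assms(1,3)
proof (induction I arbitrary: f rule: finite_induct)
  case empty
  show ?case
    by (auto simp: PiM_empty nn_integral_count_space_finite)
next
  case (insert i I)
  note f[measurable] = insert.prems
  have psf: "product_sigma_finite (\<lambda>_::nat. lborel :: real measure)"
    by (simp add: product_sigma_finite_def lborel.sigma_finite_measure_axioms)
  define G where "G x = (\<integral>\<^sup>+ y. f (x(i := y)) \<partial>lborel)" for x
  have G[measurable]: "G \<in> borel_measurable (PiM I (\<lambda>_. lborel))"
    unfolding G_def[abs_def] by (rule G_meas[OF f])
  have s_meas: "(\<lambda>u::nat\<Rightarrow>real. \<lambda>j\<in>J. c * u j) \<in> measurable (PiM J (\<lambda>_. lborel)) (PiM J (\<lambda>_. lborel))" for J :: "nat set"
    by (intro measurable_restrict) (auto intro: measurable_component_singleton)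
  have "(\<integral>\<^sup>+ x. f x \<partial>PiM (insert i I) (\<lambda>_. lborel)) = (\<integral>\<^sup>+ x. G x \<partial>PiM I (\<lambda>_. lborel))"
    unfolding G_def by (rule product_sigma_finite.product_nn_integral_insert[OF psf insert(1,2) f])
  also have "\<dots> = ennreal (c ^ card I) * (\<integral>\<^sup>+ u. G (\<lambda>j\<in>I. c * u j) \<partial>PiM I (\<lambda>_. lborel))"
    by (rule insert.IH[OF G])
  also have "(\<integral>\<^sup>+ u. G (\<lambda>j\<in>I. c * u j) \<partial>PiM I (\<lambda>_. lborel)) =
     (\<integral>\<^sup>+ u. ennreal c * (\<integral>\<^sup>+ y. f (\<lambda>j\<in>insert i I. c * (u(i := y)) j) \<partial>lborel) \<partial>PiM I (\<lambda>_. lborel))"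
  proof (rule nn_integral_cong)
    fix u :: "nat \<Rightarrow> real" assume u: "u \<in> space (PiM I (\<lambda>_. lborel))"
    define v where "v = (\<lambda>j\<in>I. c * u j)"
    have v: "v \<in> space (PiM I (\<lambda>_. lborel))" unfolding v_def by (auto simp: space_PiM)
    have hm: "(\<lambda>y. f (v(i := y))) \<in> borel_measurable borel"
      using measurable_comp[OF measurable_component_update[OF v insert(2)] f] by (simp add: comp_def)
    have "G v = ennreal \<bar>c\<bar> * (\<integral>\<^sup>+ y. f (v(i := 0 + c * y)) \<partial>lborel)"
      unfolding G_def using nn_integral_real_affine[OF hm, of c 0] assms(2) by simp
    moreover have "v(i := 0 + c * y) = (\<lambda>j\<in>insert i I. c * (u(i := y)) j)" for y
      unfolding v_def using insert(2) by (auto simp: fun_eq_iff)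
    ultimately show "G (\<lambda>j\<in>I. c * u j) = ennreal c * (\<integral>\<^sup>+ y. f (\<lambda>j\<in>insert i I. c * (u(i := y)) j) \<partial>lborel)"
      using assms(2) unfolding v_def by simp
  qed
  also have "\<dots> = ennreal c * (\<integral>\<^sup>+ u. (\<integral>\<^sup>+ y. f (\<lambda>j\<in>insert i I. c * (u(i := y)) j) \<partial>lborel) \<partial>PiM I (\<lambda>_. lborel))"
    apply (rule nn_integral_cmult)
    apply (rule G_meas[of "\<lambda>u. f (\<lambda>j\<in>insert i I. c * u j)"])
    using measurable_comp[OF s_meas f] by (simp add: comp_def)
  also have "(\<integral>\<^sup>+ u. (\<integral>\<^sup>+ y. f (\<lambda>j\<in>insert i I. c * (u(i := y)) j) \<partial>lborel) \<partial>PiM I (\<lambda>_. lborel))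
     = (\<integral>\<^sup>+ u. f (\<lambda>j\<in>insert i I. c * u j) \<partial>PiM (insert i I) (\<lambda>_. lborel))"
    apply (rule product_sigma_finite.product_nn_integral_insert[OF psf insert(1,2), symmetric])
    using measurable_comp[OF s_meas f] by (simp add: comp_def)
  finally have eq: "integral\<^sup>N (Pi\<^sub>M (insert i I) (\<lambda>_. lborel)) f = ennreal (c ^ card I) *
   (ennreal c * (\<integral>\<^sup>+ u. f (\<lambda>j\<in>insert i I. c * u j) \<partial>Pi\<^sub>M (insert i I) (\<lambda>_. lborel)))" .
  have cc: "ennreal (c ^ card (insert i I)) = ennreal c * ennreal (c ^ card I)"
    using insert(1,2) assms(2) by (simp add: ennreal_mult')
  show ?case unfolding cc eq by (simp only: ac_simps)
qed



lemma FF_scale: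
  assumes "0 < c"
  shows "FF m a b (\<lambda>i\<in>{..<m}. c * u i) = c powr (b * card (pairs m)) * FF m (a * c\<^sup>2) b u"
proof -
  have s: "(\<Sum>i<m. ((\<lambda>i\<in>{..<m}. c * u i) i)\<^sup>2) = c\<^sup>2 * (\<Sum>i<m. (u i)\<^sup>2)"
    by (simp add: sum_distrib_left power_mult_distrib)
  have p: "(\<Prod>p\<in>pairs m. \<bar>(\<lambda>i\<in>{..<m}. c * u i) (fst p) - (\<lambda>i\<in>{..<m}. c * u i) (snd p)\<bar> powr b)
      = (\<Prod>p\<in>pairs m. c powr b * \<bar>u (fst p) - u (snd p)\<bar> powr b)"
  proof (rule prod.cong)
    fix p assume "p \<in> pairs m"
    then have "fst p < m" "snd p < m" by (auto simp: pairs_def)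
    then show "\<bar>(\<lambda>i\<in>{..<m}. c * u i) (fst p) - (\<lambda>i\<in>{..<m}. c * u i) (snd p)\<bar> powr b =
      c powr b * \<bar>u (fst p) - u (snd p)\<bar> powr b"
      using assms by (simp add: right_diff_distrib[symmetric] abs_mult powr_mult)
  qed simp
  have q: "(\<Prod>p\<in>pairs m. c powr b) = c powr (b * card (pairs m))"
    using assms by (simp add: powr_realpow[symmetric] powr_powr)
  show ?thesis unfolding FF_def s p prod.distrib q
    by (simp add: algebra_simps)
qed

lemma NN_scale:
  assumes "0 < c"
  shows "NN m a b = ennreal (c ^ m * c powr (b * card (pairs m))) * NN m (a * c\<^sup>2) b"
proof -
  have "NN m a b = ennreal (c ^ m) * (\<integral>\<^sup>+ u. ennreal (FF m a b (\<lambda>i\<in>{..<m}. c * u i)) \<partial>PiM {..<m} (\<lambda>_. lborel))"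
    unfolding NN_def by (rule PiM_scale[OF _ assms, of "{..<m}", simplified]) measurable
  also have "\<dots> = ennreal (c ^ m) * (ennreal (c powr (b * card (pairs m))) * NN m (a * c\<^sup>2) b)"
    unfolding NN_def FF_scale[OF assms]
    by (subst nn_integral_cmult[symmetric]) (auto simp: ennreal_mult')
  finally show ?thesis using assms by (simp add: ennreal_mult' mult.assoc)
qed



definition hh :: "real \<Rightarrow> real" where
  "hh t = (if \<bar>t\<bar> < 1 then 2 * \<bar>t\<bar> powr (-1/2) else 0)"

lemma hh_nonneg: "0 \<le> hh t" by (simp add: hh_def)

lemma hh_meas[measurable]: "hh \<in> borel_measurable borel"
  unfolding hh_def[abs_def] by measurable

lemma hh_abs[simp]: "hh \<bar>t\<bar> = hh t" by (simp add: hh_def)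
lemma hh_neg[simp]: "hh (- t) = hh t" by (simp add: hh_def)

lemma minb:
  assumes "0 < t" "0 \<le> b"
  shows "1 - min (t powr b) 1 \<le> b * hh t"
proof (cases "t < 1")
  case False
  then have "1 \<le> t powr b" using assms by (simp add: ge_one_powr_ge_zero)
  then show ?thesis using assms hh_nonneg[of t] by simp
next
  case True
  have le1: "t powr b \<le> 1" using assms True powr_mono2[of b t 1] by simp
  have "1 + b * ln t \<le> t powr b" using assms exp_ge_add_one_self[of "b * ln t"] by (simp add: powr_def)
  moreover have "- ln t \<le> 2 * t powr (-1/2)"
  proof -
    have "ln (t powr (-1/2)) \<le> t powr (-1/2) - 1" using assms by (intro ln_le_minus_one) simp
    moreover have "ln (t powr (-1/2)) = - ln t / 2" using assms by (simp add: ln_powr)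
    ultimately show ?thesis by simp
  qed
  ultimately have "b * (- ln t) \<le> b * (2 * t powr (-1/2))"
    using assms by (intro mult_left_mono) auto
  with \<open>1 + b * ln t \<le> t powr b\<close> have "1 - t powr b \<le> b * (2 * t powr (-1/2))"
    by simp
  then show ?thesis using True le1 assms by (simp add: hh_def)
qed

lemma prod_ge_1_minus_sum:
  fixes a :: "'a \<Rightarrow> real"
  assumes "finite I" "\<And>i. i \<in> I \<Longrightarrow> 0 \<le> a i \<and> a i \<le> 1"
  shows "1 - (\<Sum>i\<in>I. 1 - a i) \<le> (\<Prod>i\<in>I. a i)"
  using assms
proof (induction I rule: finite_induct)
  case (insert j I)
  then have IH: "1 - (\<Sum>i\<in>I. 1 - a i) \<le> (\<Prod>i\<in>I. a i)" and aj: "0 \<le> a j" "a j \<le> 1" by auto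
  have s: "0 \<le> (\<Sum>i\<in>I. 1 - a i)" using insert by (intro sum_nonneg) auto
  have "a j * (1 - (\<Sum>i\<in>I. 1 - a i)) \<le> a j * (\<Prod>i\<in>I. a i)" by (rule mult_left_mono[OF IH aj(1)])
  moreover have "a j * (\<Sum>i\<in>I. 1 - a i) \<le> (\<Sum>i\<in>I. 1 - a i)"
    using mult_left_le_one_le[OF s aj] .
  then have "1 - (1 - a j + (\<Sum>i\<in>I. 1 - a i)) \<le> a j * (1 - (\<Sum>i\<in>I. 1 - a i))"
    by (simp add: right_diff_distrib)
  ultimately show ?case using insert by simp
qed simp

lemma QQ_lower:
  assumes "0 \<le> b" "y \<notin> x ` {..<m}"
  shows "1 - (\<Sum>i<m. b * hh (y - x i)) \<le> QQ m b x y"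
proof -
  have pos: "0 < \<bar>x i - y\<bar>" if "i < m" for i using assms that by auto
  have "1 - (\<Sum>i<m. b * hh (y - x i)) \<le> 1 - (\<Sum>i<m. 1 - min (\<bar>x i - y\<bar> powr b) 1)"
  proof (intro diff_left_mono sum_mono)
    fix i assume "i \<in> {..<m}"
    then have "1 - min (\<bar>x i - y\<bar> powr b) 1 \<le> b * hh \<bar>x i - y\<bar>" using minb[OF pos assms(1)] by simp
    also have "hh \<bar>x i - y\<bar> = hh (y - x i)" by (metis abs_minus_commute hh_abs)
    finally show "1 - min (\<bar>x i - y\<bar> powr b) 1 \<le> b * hh (y - x i)" .
  qed
  also have "\<dots> \<le> (\<Prod>i<m. min (\<bar>x i - y\<bar> powr b) 1)"
    by (rule prod_ge_1_minus_sum) auto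
  also have "\<dots> \<le> QQ m b x y" unfolding QQ_def by (intro prod_mono) auto
  finally show ?thesis .
qed

lemma hh0[simp]: "hh 0 = 0" by (simp add: hh_def)

lemma int_hh: "(\<integral>\<^sup>+ t. ennreal (hh t) \<partial>lborel) \<le> 8"
proof -
  have split: "ennreal (hh t) = ennreal (hh t * indicator {0<..} t) + ennreal (hh t * indicator {..<0} t)" for t
  proof -
    consider "0 < t" | "t < 0" | "t = 0" by linarith
    then show ?thesis by cases (simp_all add: indicator_def)
  qed
  have m1[measurable]: "(\<lambda>t. ennreal (hh t * indicator {0<..} t)) \<in> borel_measurable borel" by measurable
  have m2[measurable]: "(\<lambda>t. ennreal (hh t * indicator {..<0} t)) \<in> borel_measurable borel" by measurable
  have refl: "(\<integral>\<^sup>+ t. ennreal (hh t * indicator {..<0} t) \<partial>lborel) = (\<integral>\<^sup>+ t. ennreal (hh t * indicator {0<..} t) \<partial>lborel)"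
  proof -
    have "(\<lambda>x. ennreal (hh (0 + -1 * x) * indicator {..<0} (0 + -1 * x))) = (\<lambda>x. ennreal (hh x * indicator {0<..} x))"
      by (auto simp: indicator_def fun_eq_iff)
    then show ?thesis using nn_integral_real_affine[OF m2, of "-1" 0] by simp
  qed
  have hi: "((\<lambda>x. x powr (-1/2)) has_integral 2) {0..1::real}"
  proof -
    have "((\<lambda>x. x powr (-1/2)) has_integral (1 powr (-1/2+1) / (-1/2+1))) {0..1::real}"
      by (rule has_integral_powr_from_0) auto
    moreover have "1 powr (-1/2+1) / (-1/2+1) = (2::real)" by simp
    ultimately show ?thesis by simp
  qed
  have hi2: "((\<lambda>x. indicator {0..1} x * x powr (-1/2)) has_integral (2::real)) UNIV"
  proof -
    have eq: "(\<lambda>x. indicator {0..1} x * x powr (-1/2)) = (\<lambda>x. if x \<in> {0..1} then x powr (-1/2) else (0::real))"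
      by (auto simp: indicator_def fun_eq_iff)
    show ?thesis by (subst eq) (simp only: has_integral_restrict_UNIV hi)
  qed
  have e2: "(\<integral>\<^sup>+ t. ennreal (indicator {0..1} t * t powr (-1/2)) \<partial>lborel) = 2"
  proof -
    have m: "(\<lambda>x. indicator {0..1} x * x powr (- 1 / 2) :: real) \<in> borel_measurable borel" by measurable
    have n: "\<And>x. 0 \<le> (indicator {0..1} x * x powr (- 1 / 2) :: real)" by (auto simp: indicator_def)
    show ?thesis using nn_integral_has_integral_lborel[OF m n hi2] by simp
  qed
  have pw: "ennreal (hh t * indicator {0<..} t) \<le> ennreal (2 * (indicator {0..1} t * t powr (-1/2)))" for t
  proof (rule ennreal_leI)
    consider "t \<le> 0" | "0 < t" "t < 1" | "1 \<le> t" by linarith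
    then show "hh t * indicator {0<..} t \<le> 2 * (indicator {0..1} t * t powr (-1/2))"
      by cases (auto simp: hh_def indicator_def)
  qed
  have "(\<integral>\<^sup>+ t. ennreal (hh t * indicator {0<..} t) \<partial>lborel) \<le> (\<integral>\<^sup>+ t. ennreal 2 * ennreal (indicator {0..1} t * t powr (-1/2)) \<partial>lborel)"
    using pw by (intro nn_integral_mono) (simp add: ennreal_mult)
  also have "\<dots> = 4" using e2 by (subst nn_integral_cmult) auto
  finally have h4: "(\<integral>\<^sup>+ t. ennreal (hh t * indicator {0<..} t) \<partial>lborel) \<le> 4" .
  have "(\<integral>\<^sup>+ t. ennreal (hh t) \<partial>lborel) = (\<integral>\<^sup>+ t. ennreal (hh t * indicator {0<..} t) \<partial>lborel) + (\<integral>\<^sup>+ t. ennreal (hh t * indicator {..<0} t) \<partial>lborel)"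
    unfolding split by (rule nn_integral_add) auto
  also have "\<dots> \<le> 4 + 4" unfolding refl using h4 by (intro add_mono) auto
  finally show ?thesis by simp
qed

lemma int_hh_shift: "(\<integral>\<^sup>+ t. ennreal (hh (t - c)) \<partial>lborel) \<le> 8"
proof -
  have m[measurable]: "(\<lambda>t. ennreal (hh (t - c))) \<in> borel_measurable borel" by measurable
  show ?thesis using nn_integral_real_affine[OF m, of 1 c] int_hh by simp
qed



definition SS :: "real \<Rightarrow> real" where "SS a = sqrt (2 * pi / a)"
definition M1 :: "real \<Rightarrow> real" where
  "M1 a = SS a * (\<integral>y. normal_density 0 (1 / sqrt a) y * \<bar>y\<bar> \<partial>lborel)"

lemma SS_pos: "0 < a \<Longrightarrow> 0 < SS a" by (simp add: SS_def)

lemma M1_nonneg: "0 < a \<Longrightarrow> 0 \<le> M1 a"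
  unfolding M1_def using SS_pos[of a] by (intro mult_nonneg_nonneg integral_nonneg_AE) auto

lemma gg_nd: assumes "0 < a" shows "gg a y = SS a * normal_density 0 (1 / sqrt a) y"
proof -
  have s: "(1 / sqrt a)\<^sup>2 = 1 / a" using assms by (simp add: power_divide)
  have "SS a * (1 / sqrt (2 * pi * (1 / a))) = 1" using assms by (simp add: SS_def)
  moreover have "- (y - 0)\<^sup>2 / (2 * (1 / a)) = - (a / 2) * y\<^sup>2" using assms by (simp add: field_simps)
  ultimately show ?thesis unfolding normal_density_def gg_def s using SS_pos[OF assms] by simp
qed

lemma gg_pos: "0 < gg a y" by (simp add: gg_def)
lemma gg_le1: "0 \<le> a \<Longrightarrow> gg a y \<le> 1" by (simp add: gg_def)

lemma int_gg: assumes "0 < a" shows "(\<integral>\<^sup>+ y. ennreal (gg a y) \<partial>lborel) = ennreal (SS a)"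
proof -
  have "(\<integral>\<^sup>+ y. ennreal (gg a y) \<partial>lborel) = (\<integral>\<^sup>+ y. ennreal (SS a) * ennreal (normal_density 0 (1 / sqrt a) y) \<partial>lborel)"
    using SS_pos[OF assms] by (simp add: gg_nd[OF assms] ennreal_mult)
  also have "\<dots> = ennreal (SS a) * (\<integral>\<^sup>+ y. ennreal (normal_density 0 (1 / sqrt a) y) \<partial>lborel)"
    by (rule nn_integral_cmult) measurable
  also have "(\<integral>\<^sup>+ y. ennreal (normal_density 0 (1 / sqrt a) y) \<partial>lborel) = 1"
    using assms by (subst nn_integral_eq_integral) auto
  finally show ?thesis by simp
qed

lemma int_gg_abs: assumes "0 < a" shows "(\<integral>\<^sup>+ y. ennreal (gg a y * \<bar>y\<bar>) \<partial>lborel) = ennreal (M1 a)"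
proof -
  have i: "integrable lborel (\<lambda>y. normal_density 0 (1 / sqrt a) y * \<bar>y\<bar>)"
    using integrable_normal_moment_abs[where \<sigma>="1 / sqrt a" and \<mu>=0 and k=1] assms by simp
  have "(\<integral>\<^sup>+ y. ennreal (gg a y * \<bar>y\<bar>) \<partial>lborel) = (\<integral>\<^sup>+ y. ennreal (SS a) * ennreal (normal_density 0 (1 / sqrt a) y * \<bar>y\<bar>) \<partial>lborel)"
    using SS_pos[OF assms] by (simp add: gg_nd[OF assms] ennreal_mult mult.assoc)
  also have "\<dots> = ennreal (SS a) * (\<integral>\<^sup>+ y. ennreal (normal_density 0 (1 / sqrt a) y * \<bar>y\<bar>) \<partial>lborel)"
    by (rule nn_integral_cmult) measurable
  also have "(\<integral>\<^sup>+ y. ennreal (normal_density 0 (1 / sqrt a) y * \<bar>y\<bar>) \<partial>lborel) = ennreal (\<integral>y. normal_density 0 (1 / sqrt a) y * \<bar>y\<bar> \<partial>lborel)"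
    by (rule nn_integral_eq_integral[OF i]) auto
  finally show ?thesis unfolding M1_def using SS_pos[OF assms]
    by (simp add: ennreal_mult integral_nonneg_AE)
qed

lemma J_lower:
  assumes "0 < a" "0 \<le> b"
  shows "ennreal (SS a) \<le> (\<integral>\<^sup>+ y. ennreal (gg a y * QQ m b x y) \<partial>lborel) + ennreal (8 * m * b)"
proof -
  have AE: "AE y in lborel. y \<notin> x ` {..<m}"
    by (rule AE_discrete_difference) auto
  have "ennreal (SS a) = (\<integral>\<^sup>+ y. ennreal (gg a y) \<partial>lborel)" using int_gg[OF assms(1)] by simp
  also have "\<dots> \<le> (\<integral>\<^sup>+ y. ennreal (gg a y * QQ m b x y) + (\<Sum>i<m. ennreal b * ennreal (hh (y - x i))) \<partial>lborel)"
  proof (rule nn_integral_mono_AE)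
    show "AE y in lborel. ennreal (gg a y) \<le> ennreal (gg a y * QQ m b x y) + (\<Sum>i<m. ennreal b * ennreal (hh (y - x i)))"
      using AE
    proof eventually_elim
      case (elim y)
      have S0: "0 \<le> (\<Sum>i<m. b * hh (y - x i))" using assms by (intro sum_nonneg mult_nonneg_nonneg hh_nonneg) auto
      have "gg a y * (1 - (\<Sum>i<m. b * hh (y - x i))) \<le> gg a y * QQ m b x y"
        using QQ_lower[OF assms(2) elim] gg_pos[of a y] by (intro mult_left_mono) auto
      moreover have "gg a y * (\<Sum>i<m. b * hh (y - x i)) \<le> (\<Sum>i<m. b * hh (y - x i))"
        using gg_le1[of a y] assms S0 gg_pos[of a y] by (intro mult_left_le_one_le) auto
      ultimately have "gg a y \<le> gg a y * QQ m b x y + (\<Sum>i<m. b * hh (y - x i))"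
        by (simp add: right_diff_distrib)
      then have "ennreal (gg a y) \<le> ennreal (gg a y * QQ m b x y + (\<Sum>i<m. b * hh (y - x i)))"
        by (rule ennreal_leI)
      also have "\<dots> = ennreal (gg a y * QQ m b x y) + (\<Sum>i<m. ennreal b * ennreal (hh (y - x i)))"
        using S0 gg_pos[of a y] assms
      proof -
        have e1: "(\<Sum>i<m. ennreal b * ennreal (hh (y - x i))) = (\<Sum>i<m. ennreal (b * hh (y - x i)))"
          using assms by (simp add: ennreal_mult hh_nonneg)
        have e2: "(\<Sum>i<m. ennreal (b * hh (y - x i))) = ennreal (\<Sum>i<m. b * hh (y - x i))"
          by (rule sum_ennreal) (simp add: assms hh_nonneg)
        show ?thesis unfolding e1 e2 using S0 gg_pos[of a y] assms
          by (subst ennreal_plus) (auto simp: QQ_def intro!: mult_nonneg_nonneg prod_nonneg)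
      qed
      finally show ?case .
    qed
  qed
  also have "\<dots> = (\<integral>\<^sup>+ y. ennreal (gg a y * QQ m b x y) \<partial>lborel) + (\<Sum>i<m. \<integral>\<^sup>+ y. ennreal b * ennreal (hh (y - x i)) \<partial>lborel)"
    by (subst nn_integral_add) (auto simp: nn_integral_sum)
  also have "(\<Sum>i<m. \<integral>\<^sup>+ y. ennreal b * ennreal (hh (y - x i)) \<partial>lborel) \<le> (\<Sum>i<m. ennreal b * 8)"
  proof (rule sum_mono)
    fix i
    have "(\<integral>\<^sup>+ y. ennreal b * ennreal (hh (y - x i)) \<partial>lborel) = ennreal b * (\<integral>\<^sup>+ y. ennreal (hh (y - x i)) \<partial>lborel)"
      by (rule nn_integral_cmult) measurable
    also have "\<dots> \<le> ennreal b * 8" by (intro mult_left_mono int_hh_shift) auto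
    finally show "(\<integral>\<^sup>+ y. ennreal b * ennreal (hh (y - x i)) \<partial>lborel) \<le> ennreal b * 8" .
  qed
  also have "(\<Sum>i<m. ennreal b * 8) = ennreal (8 * m * b)"
    using assms by (simp add: ennreal_mult ennreal_of_nat_eq_real_of_nat mult_ac)
  finally show ?thesis by (simp add: add_left_mono)
qed



definition PX :: "nat \<Rightarrow> real \<Rightarrow> (nat \<Rightarrow> real) \<Rightarrow> real" where
  "PX m b x = (\<Prod>i<m. (1 + \<bar>x i\<bar>) powr b)"

lemma PX_nonneg: "0 \<le> PX m b x" unfolding PX_def by (intro prod_nonneg) auto

lemma QQ_upper:
  assumes "0 \<le> b" "m * b \<le> 1"
  shows "QQ m b x y \<le> (1 + m * b * \<bar>y\<bar>) * PX m b x"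
proof -
  have "QQ m b x y \<le> (\<Prod>i<m. (1 + \<bar>y\<bar>) powr b * (1 + \<bar>x i\<bar>) powr b)"
    unfolding QQ_def
  proof (intro prod_mono conjI)
    fix i
    have "\<bar>x i - y\<bar> \<le> (1 + \<bar>y\<bar>) * (1 + \<bar>x i\<bar>)"
      by (simp add: algebra_simps) (smt (verit) abs_ge_zero mult_nonneg_nonneg)
    then have "\<bar>x i - y\<bar> powr b \<le> ((1 + \<bar>y\<bar>) * (1 + \<bar>x i\<bar>)) powr b"
      using assms by (intro powr_mono2) auto
    then show "\<bar>x i - y\<bar> powr b \<le> (1 + \<bar>y\<bar>) powr b * (1 + \<bar>x i\<bar>) powr b"
      by (simp add: powr_mult)
  qed auto
  also have "\<dots> = (1 + \<bar>y\<bar>) powr (m * b) * PX m b x"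
    unfolding PX_def prod.distrib
    by (simp add: powr_realpow[symmetric] powr_powr mult.commute)
  also have "\<dots> \<le> (1 + m * b * \<bar>y\<bar>) * PX m b x"
  proof (rule mult_right_mono[OF _ PX_nonneg])
    have "(1 + \<bar>y\<bar>) powr (m * b) * 1 powr (1 - m * b) \<le> (m * b) * (1 + \<bar>y\<bar>) + (1 - m * b) * 1"
      using assms by (intro Youngs_inequality_0) auto
    then show "(1 + \<bar>y\<bar>) powr (m * b) \<le> 1 + m * b * \<bar>y\<bar>" by (simp add: algebra_simps)
  qed
  finally show ?thesis .
qed

lemma J_upper:
  assumes "0 < a" "0 \<le> b" "m * b \<le> 1"
  shows "(\<integral>\<^sup>+ y. ennreal (gg a y * QQ m b x y) \<partial>lborel) \<le> ennreal ((SS a + m * b * M1 a) * PX m b x)"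
proof -
  have "(\<integral>\<^sup>+ y. ennreal (gg a y * QQ m b x y) \<partial>lborel) \<le>
     (\<integral>\<^sup>+ y. ennreal (PX m b x) * (ennreal (gg a y) + ennreal (m * b) * ennreal (gg a y * \<bar>y\<bar>)) \<partial>lborel)"
  proof (rule nn_integral_mono)
    fix y
    have "gg a y * QQ m b x y \<le> gg a y * ((1 + m * b * \<bar>y\<bar>) * PX m b x)"
      using QQ_upper[OF assms(2,3)] gg_pos[of a y] by (intro mult_left_mono) auto
    also have "\<dots> = PX m b x * (gg a y + (m * b) * (gg a y * \<bar>y\<bar>))" by (simp add: algebra_simps)
    finally have "ennreal (gg a y * QQ m b x y) \<le> ennreal (PX m b x * (gg a y + (m * b) * (gg a y * \<bar>y\<bar>)))"
      by (rule ennreal_leI)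
    also have "\<dots> = ennreal (PX m b x) * (ennreal (gg a y) + ennreal (m * b) * ennreal (gg a y * \<bar>y\<bar>))"
    proof -
      have nn: "0 \<le> m * b * (gg a y * \<bar>y\<bar>)" using assms gg_pos[of a y] by (intro mult_nonneg_nonneg) auto
      have "ennreal (gg a y + m * b * (gg a y * \<bar>y\<bar>)) = ennreal (gg a y) + ennreal (m * b * (gg a y * \<bar>y\<bar>))"
        using nn gg_pos[of a y] by (intro ennreal_plus) auto
      also have "\<dots> = ennreal (gg a y) + ennreal (m * b) * ennreal (gg a y * \<bar>y\<bar>)"
        using assms gg_pos[of a y] by (subst ennreal_mult) auto
      finally show ?thesis using PX_nonneg[of m b x] gg_pos[of a y] nn by (subst ennreal_mult) auto
    qed
    finally show "ennreal (gg a y * QQ m b x y) \<le> ennreal (PX m b x) * (ennreal (gg a y) + ennreal (m * b) * ennreal (gg a y * \<bar>y\<bar>))" .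
  qed
  also have "\<dots> = ennreal (PX m b x) * ((\<integral>\<^sup>+ y. ennreal (gg a y) \<partial>lborel) + ennreal (m * b) * (\<integral>\<^sup>+ y. ennreal (gg a y * \<bar>y\<bar>) \<partial>lborel))"
    by (simp add: nn_integral_cmult nn_integral_add)
  also have "\<dots> = ennreal (PX m b x) * (ennreal (SS a) + ennreal (m * b) * ennreal (M1 a))"
    unfolding int_gg[OF assms(1)] int_gg_abs[OF assms(1)] ..
  also have "\<dots> = ennreal (PX m b x) * (ennreal (SS a) + ennreal (m * b * M1 a))"
    using assms M1_nonneg[of a] by (subst ennreal_mult[symmetric]) auto
  also have "\<dots> = ennreal (PX m b x) * ennreal (SS a + m * b * M1 a)"
    using assms M1_nonneg[of a] SS_pos[of a] by (subst ennreal_plus[symmetric]) auto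
  also have "\<dots> = ennreal ((SS a + m * b * M1 a) * PX m b x)"
    using assms M1_nonneg[of a] SS_pos[of a] PX_nonneg[of m b x]
    by (subst ennreal_mult[symmetric]) (auto simp: mult.commute)
  finally show ?thesis .
qed


definition JJ :: "nat \<Rightarrow> real \<Rightarrow> real \<Rightarrow> (nat \<Rightarrow> real) \<Rightarrow> ennreal" where
  "JJ m a b x = (\<integral>\<^sup>+ y. ennreal (gg a y * QQ m b x y) \<partial>lborel)"

lemma JJ_meas[measurable]: "JJ m a b \<in> borel_measurable (PiM {..<m} (\<lambda>_. lborel))"
proof -
  define Fz where "Fz z = ennreal (gg a (z m) * (\<Prod>i<m. \<bar>z i - z m\<bar> powr b))" for z :: "nat \<Rightarrow> real"
  have c: "(\<lambda>z::nat\<Rightarrow>real. z i) \<in> borel_measurable (PiM (insert m {..<m}) (\<lambda>_. lborel))" if "i \<le> m" for i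
  proof -
    have "i \<in> insert m {..<m}" using that by auto
    from measurable_component_singleton[OF this, of "\<lambda>_::nat. lborel::real measure"] show ?thesis by simp
  qed
  have cm[measurable]: "(\<lambda>z::nat\<Rightarrow>real. z m) \<in> borel_measurable (PiM (insert m {..<m}) (\<lambda>_. lborel))"
    using c by auto
  have "(\<lambda>z::nat\<Rightarrow>real. \<Prod>i<m. \<bar>z i - z m\<bar> powr b) \<in> borel_measurable (PiM (insert m {..<m}) (\<lambda>_. lborel))"
  proof (rule borel_measurable_prod)
    fix i assume "i \<in> {..<m}"
    then have [measurable]: "(\<lambda>z::nat\<Rightarrow>real. z i) \<in> borel_measurable (PiM (insert m {..<m}) (\<lambda>_. lborel))"
      using c by auto
    show "(\<lambda>z::nat\<Rightarrow>real. \<bar>z i - z m\<bar> powr b) \<in> borel_measurable (PiM (insert m {..<m}) (\<lambda>_. lborel))"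
      by measurable
  qed
  then have Fm: "Fz \<in> borel_measurable (PiM (insert m {..<m}) (\<lambda>_. lborel))"
    unfolding Fz_def[abs_def] gg_def by measurable
  have eq: "JJ m a b = (\<lambda>x. \<integral>\<^sup>+ y. Fz (x(m := y)) \<partial>lborel)"
    by (auto simp: fun_eq_iff JJ_def Fz_def QQ_def intro!: nn_integral_cong prod.cong)
  show ?thesis unfolding eq by (rule G_meas[OF Fm])
qed

lemma NN_Suc': "NN (Suc m) a b = (\<integral>\<^sup>+ x. ennreal (FF m a b x) * JJ m a b x \<partial>PiM {..<m} (\<lambda>_. lborel))"
  unfolding NN_Suc JJ_def ..

lemma NN_lower:
  assumes "0 < a" "0 \<le> b"
  shows "ennreal (SS a) * NN m a b \<le> NN (Suc m) a b + ennreal (8 * real m * b) * NN m a b"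
proof -
  have "ennreal (SS a) * NN m a b = (\<integral>\<^sup>+ x. ennreal (FF m a b x) * ennreal (SS a) \<partial>PiM {..<m} (\<lambda>_. lborel))"
    unfolding NN_def by (subst nn_integral_multc) (auto simp: mult.commute)
  also have "\<dots> \<le> (\<integral>\<^sup>+ x. ennreal (FF m a b x) * JJ m a b x + ennreal (FF m a b x) * ennreal (8 * real m * b) \<partial>PiM {..<m} (\<lambda>_. lborel))"
  proof (rule nn_integral_mono)
    fix x
    have "ennreal (SS a) \<le> JJ m a b x + ennreal (8 * real m * b)"
      using J_lower[OF assms, of m x] by (simp add: JJ_def)
    then have "ennreal (FF m a b x) * ennreal (SS a) \<le> ennreal (FF m a b x) * (JJ m a b x + ennreal (8 * real m * b))"
      by (rule mult_left_mono) auto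
    then show "ennreal (FF m a b x) * ennreal (SS a) \<le> ennreal (FF m a b x) * JJ m a b x + ennreal (FF m a b x) * ennreal (8 * real m * b)"
      by (simp add: distrib_left)
  qed
  also have "\<dots> = (\<integral>\<^sup>+ x. ennreal (FF m a b x) * JJ m a b x \<partial>PiM {..<m} (\<lambda>_. lborel)) +
      (\<integral>\<^sup>+ x. ennreal (FF m a b x) * ennreal (8 * real m * b) \<partial>PiM {..<m} (\<lambda>_. lborel))"
    by (rule nn_integral_add) auto
  also have "(\<integral>\<^sup>+ x. ennreal (FF m a b x) * JJ m a b x \<partial>PiM {..<m} (\<lambda>_. lborel)) = NN (Suc m) a b"
    by (rule NN_Suc'[symmetric])
  also have "(\<integral>\<^sup>+ x. ennreal (FF m a b x) * ennreal (8 * real m * b) \<partial>PiM {..<m} (\<lambda>_. lborel)) = ennreal (8 * real m * b) * NN m a b"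
    unfolding NN_def by (subst nn_integral_multc) (auto simp: mult.commute)
  finally show ?thesis .
qed

lemma PX_exp:
  assumes "0 < e" "0 \<le> b"
  shows "PX m b x \<le> exp (e / 2 * (\<Sum>i<m. (x i)\<^sup>2) + m * b\<^sup>2 / (2 * e))"
proof -
  have one: "(1 + t) powr b \<le> exp (e / 2 * t\<^sup>2 + b\<^sup>2 / (2 * e))" if t: "0 \<le> t" for t :: real
  proof -
    have "(1 + t) powr b = exp (b * ln (1 + t))" using t by (simp add: powr_def)
    also have "b * ln (1 + t) \<le> b * t" using t assms by (intro mult_left_mono ln_add_one_self_le_self) auto
    then have "exp (b * ln (1 + t)) \<le> exp (b * t)" by simp
    also have "b * t \<le> e / 2 * t\<^sup>2 + b\<^sup>2 / (2 * e)"
    proof -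
      have sq: "0 \<le> (e * t - b)\<^sup>2" by simp
      have "2 * e * (e / 2 * t\<^sup>2 + b\<^sup>2 / (2 * e)) = (e * t)\<^sup>2 + b\<^sup>2"
        using assms by (simp add: field_simps power2_eq_square)
      moreover have "(e * t - b)\<^sup>2 = (e * t)\<^sup>2 - 2 * e * (b * t) + b\<^sup>2"
        by (simp add: power2_eq_square algebra_simps)
      ultimately have "2 * e * (b * t) \<le> 2 * e * (e / 2 * t\<^sup>2 + b\<^sup>2 / (2 * e))" using sq by linarith
      then show ?thesis using assms by simp
    qed
    then have "exp (b * t) \<le> exp (e / 2 * t\<^sup>2 + b\<^sup>2 / (2 * e))" by simp
    finally show ?thesis .
  qed
  have "PX m b x \<le> (\<Prod>i<m. exp (e / 2 * (\<bar>x i\<bar>)\<^sup>2 + b\<^sup>2 / (2 * e)))"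
    unfolding PX_def by (intro prod_mono conjI one) auto
  also have "\<dots> = exp (\<Sum>i<m. e / 2 * (x i)\<^sup>2 + b\<^sup>2 / (2 * e))" by (simp add: exp_sum)
  also have "(\<Sum>i<m. e / 2 * (x i)\<^sup>2 + b\<^sup>2 / (2 * e)) = e / 2 * (\<Sum>i<m. (x i)\<^sup>2) + m * b\<^sup>2 / (2 * e)"
    by (simp add: sum.distrib sum_distrib_left)
  finally show ?thesis .
qed

lemma NN_upper:
  assumes "0 < e" "e < a" "0 \<le> b" "m * b \<le> 1"
  shows "NN (Suc m) a b \<le> ennreal ((SS a + m * b * M1 a) * exp (m * b\<^sup>2 / (2 * e))) * NN m (a - e) b"
proof -
  let ?K = "SS a + m * b * M1 a" and ?E = "exp (m * b\<^sup>2 / (2 * e))"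
  have K: "0 \<le> ?K" using SS_pos[of a] M1_nonneg[of a] assms by auto
  have "NN (Suc m) a b \<le> (\<integral>\<^sup>+ x. ennreal (?K * ?E) * ennreal (FF m (a - e) b x) \<partial>PiM {..<m} (\<lambda>_. lborel))"
    unfolding NN_Suc'
  proof (rule nn_integral_mono)
    fix x
    have "JJ m a b x \<le> ennreal (?K * PX m b x)" unfolding JJ_def
      using J_upper[of a b m x] assms by auto
    then have "ennreal (FF m a b x) * JJ m a b x \<le> ennreal (FF m a b x) * ennreal (?K * PX m b x)"
      by (rule mult_left_mono) auto
    also have "\<dots> = ennreal (?K * (FF m a b x * PX m b x))"
      using K FF_nonneg[of m a b x] PX_nonneg[of m b x] by (simp add: ennreal_mult[symmetric] mult_ac)
    also have "\<dots> \<le> ennreal (?K * (?E * FF m (a - e) b x))"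
    proof (intro ennreal_leI mult_left_mono K)
      have "FF m a b x * PX m b x \<le> FF m a b x * exp (e / 2 * (\<Sum>i<m. (x i)\<^sup>2) + m * b\<^sup>2 / (2 * e))"
        using PX_exp[OF assms(1,3)] FF_nonneg[of m a b x] by (intro mult_left_mono) auto
      also have "\<dots> = ?E * FF m (a - e) b x"
        unfolding FF_def by (simp add: exp_add[symmetric] algebra_simps diff_divide_distrib)
      finally show "FF m a b x * PX m b x \<le> ?E * FF m (a - e) b x" .
    qed
    also have "\<dots> = ennreal (?K * ?E) * ennreal (FF m (a - e) b x)"
      using K FF_nonneg[of m "a - e" b x] by (simp add: ennreal_mult[symmetric] mult_ac)
    finally show "ennreal (FF m a b x) * JJ m a b x \<le> ennreal (?K * ?E) * ennreal (FF m (a - e) b x)" .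
  qed
  also have "\<dots> = ennreal (?K * ?E) * NN m (a - e) b"
    unfolding NN_def by (rule nn_integral_cmult) measurable
  finally show ?thesis .
qed



lemma NN_0: "NN 0 a b = 1"
  unfolding NN_def by (simp add: PiM_empty nn_integral_count_space_finite FF_def pairs_def)

lemma Suc_mb: "0 \<le> b \<Longrightarrow> real (Suc m) * b \<le> c \<Longrightarrow> real m * b \<le> c"
  by (rule order_trans[of _ "real (Suc m) * b"]) (auto intro!: mult_right_mono)

lemma NN_fin: "0 < a \<Longrightarrow> 0 \<le> b \<Longrightarrow> real m * b \<le> 1 \<Longrightarrow> NN m a b < \<top>"
proof (induction m arbitrary: a)
  case 0
  then show ?case by (simp add: NN_0)
next
  case (Suc m)
  have mb: "real m * b \<le> 1" using Suc_mb[of b m 1] Suc.prems by auto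
  define K where "K = (SS a + m * b * M1 a) * exp (m * b\<^sup>2 / (2 * (a / 2)))"
  have "NN (Suc m) a b \<le> ennreal K * NN m (a - a / 2) b"
    unfolding K_def using Suc.prems mb by (intro NN_upper) auto
  moreover have "NN m (a - a / 2) b = NN m (a / 2) b" by simp
  ultimately have le: "NN (Suc m) a b \<le> ennreal K * NN m (a / 2) b" by simp
  have f: "NN m (a / 2) b < \<top>" using Suc.IH[of "a / 2"] Suc.prems mb by simp
  have "ennreal K * NN m (a / 2) b < \<top>"
    using f by (simp add: ennreal_mult_less_top)
  with le show ?case by (rule le_less_trans)
qed

definition zz :: "nat \<Rightarrow> real \<Rightarrow> real \<Rightarrow> real" where "zz m a b = enn2real (NN m a b)"

lemma NN_zz: "0 < a \<Longrightarrow> 0 \<le> b \<Longrightarrow> real m * b \<le> 1 \<Longrightarrow> NN m a b = ennreal (zz m a b)"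
  unfolding zz_def using NN_fin[of a b m] by (simp add: ennreal_enn2real_if)

lemma zz_nonneg: "0 \<le> zz m a b" unfolding zz_def by simp

lemma zz_lower:
  assumes "0 < a" "0 \<le> b" "real (Suc m) * b \<le> 1"
  shows "(SS a - 8 * real m * b) * zz m a b \<le> zz (Suc m) a b"
proof -
  have mb: "real m * b \<le> 1" using Suc_mb[of b m 1] assms by auto
  have z: "0 \<le> zz m a b" "0 \<le> zz (Suc m) a b" by (rule zz_nonneg)+
  have S: "0 \<le> SS a" using SS_pos[OF assms(1)] by simp
  have c8: "0 \<le> 8 * real m * b" using assms by simp
  have "ennreal (SS a * zz m a b) = ennreal (SS a) * NN m a b"
    using NN_zz[OF assms(1,2) mb] S z by (simp add: ennreal_mult)
  also have "\<dots> \<le> NN (Suc m) a b + ennreal (8 * real m * b) * NN m a b"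
    using NN_lower[OF assms(1,2)] by simp
  also have "\<dots> = ennreal (zz (Suc m) a b) + ennreal (8 * real m * b * zz m a b)"
    using NN_zz[OF assms(1,2) mb] NN_zz[OF assms] c8 z by (simp add: ennreal_mult)
  also have "\<dots> = ennreal (zz (Suc m) a b + 8 * real m * b * zz m a b)"
    using c8 z by (intro ennreal_plus[symmetric]) auto
  finally have "SS a * zz m a b \<le> zz (Suc m) a b + 8 * real m * b * zz m a b"
    using c8 z by (subst (asm) ennreal_le_iff) auto
  then show ?thesis by (simp add: algebra_simps)
qed

lemma zz_upper:
  fixes a b e :: real
  assumes "0 < e" "e < a" "0 \<le> b" "real (Suc m) * b \<le> 1"
  shows "zz (Suc m) a b \<le> (SS a + m * b * M1 a) * exp (m * b\<^sup>2 / (2 * e)) *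
     (sqrt (a / (a - e)) ^ m * sqrt (a / (a - e)) powr (b * card (pairs m))) * zz m a b"
proof -
  have mb: "real m * b \<le> 1" using Suc_mb[of b m 1] assms by auto
  define c where "c = sqrt (a / (a - e))"
  define K where "K = (SS a + m * b * M1 a) * exp (m * b\<^sup>2 / (2 * e))"
  define C where "C = c ^ m * c powr (b * card (pairs m))"
  have c: "0 < c" using assms by (simp add: c_def)
  have K: "0 \<le> K" unfolding K_def using assms SS_pos[of a] M1_nonneg[of a]
    by (intro mult_nonneg_nonneg add_nonneg_nonneg) auto
  have C: "0 \<le> C" unfolding C_def using c by simp
  have z: "0 \<le> zz m a b" by (rule zz_nonneg)
  have cc: "(a - e) * c\<^sup>2 = a" using assms by (simp add: c_def)
  have sc: "NN m (a - e) b = ennreal C * NN m a b"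
    using NN_scale[OF c, of m "a - e" b] unfolding cc C_def .
  have "ennreal (zz (Suc m) a b) = NN (Suc m) a b"
    using NN_zz[of a b "Suc m"] assms by simp
  also have "\<dots> \<le> ennreal K * NN m (a - e) b"
    unfolding K_def using assms mb by (intro NN_upper) auto
  also have "\<dots> = ennreal K * (ennreal C * ennreal (zz m a b))"
    unfolding sc using NN_zz[of a b m] assms mb by simp
  also have "\<dots> = ennreal (K * (C * zz m a b))"
    using K C z by (simp add: ennreal_mult)
  finally have "zz (Suc m) a b \<le> K * (C * zz m a b)"
    using K C z by (subst (asm) ennreal_le_iff) auto
  then show ?thesis unfolding K_def C_def c_def by (simp add: mult_ac)
qed

lemma zz_pos:
  assumes "0 < a" "0 \<le> b" "real m * b \<le> 1" "8 * real m * b < SS a"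
  shows "0 < zz m a b"
  using assms
proof (induction m)
  case 0
  then show ?case by (simp add: zz_def NN_0)
next
  case (Suc m)
  have mb: "real m * b \<le> 1" using Suc_mb[of b m 1] Suc.prems by auto
  have m8: "8 * real m * b < SS a"
  proof -
    have "8 * real m * b \<le> 8 * real (Suc m) * b" using Suc.prems by (intro mult_right_mono) auto
    then show ?thesis using Suc.prems by linarith
  qed
  have "0 < (SS a - 8 * real m * b) * zz m a b"
    using Suc.IH[OF Suc.prems(1,2) mb m8] m8 by simp
  also have "\<dots> \<le> zz (Suc m) a b" using zz_lower Suc.prems by blast
  finally show ?case .
qed

lemma card_pairs_le: "card (pairs m) \<le> m * m"
proof -
  have "card (pairs m) \<le> card ({..<m} \<times> {..<m})"
    by (intro card_mono) (auto simp: pairs_def)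
  then show ?thesis by (simp add: card_cartesian_product)
qed



lemma cpow_bounds:
  fixes a e X :: real
  assumes "0 \<le> e" "e < a" "0 \<le> X"
  shows "1 \<le> sqrt (a / (a - e)) powr X" "sqrt (a / (a - e)) powr X \<le> exp (X * e / (2 * (a - e)))"
proof -
  define y where "y = a / (a - e)"
  have y1: "1 \<le> y" using assms by (simp add: y_def field_simps)
  have ypos: "0 < y" using y1 by simp
  have e1: "sqrt y powr X = exp (X * (ln y / 2))"
    using ypos by (simp add: powr_def ln_sqrt)
  have l0: "0 \<le> ln y" using y1 by simp
  have l1: "ln y \<le> e / (a - e)"
  proof -
    have "ln y \<le> y - 1" using ypos by (rule ln_le_minus_one)
    also have "y - 1 = e / (a - e)" using assms by (simp add: y_def field_simps)
    finally show ?thesis .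
  qed
  show "1 \<le> sqrt (a / (a - e)) powr X"
    unfolding y_def[symmetric] e1 using l0 assms by simp
  have h: "ln y / 2 \<le> e / (a - e) / 2" by (rule divide_right_mono[OF l1]) simp
  have h2: "X * (ln y / 2) \<le> X * (e / (a - e) / 2)" using h assms(3) by (rule mult_left_mono)
  have eq: "X * (e / (a - e) / 2) = X * e / (2 * (a - e))" by simp
  show "sqrt (a / (a - e)) powr X \<le> exp (X * e / (2 * (a - e)))"
    unfolding y_def[symmetric] e1 eq[symmetric] using h2 by simp
qed

lemma telescope:
  fixes z :: "nat \<Rightarrow> real"
  assumes "\<And>j. j \<le> k \<Longrightarrow> 0 < z (m + j)"
  shows "z (m + k) / z m = (\<Prod>j<k. z (m + j + 1) / z (m + j))"
  using assms
proof (induction k)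
  case 0
  then show ?case using 0 by (simp add: less_imp_neq[symmetric])
next
  case (Suc k)
  have IH: "z (m + k) / z m = (\<Prod>j<k. z (m + j + 1) / z (m + j))" using Suc by auto
  have p: "0 < z (m + k)" "0 < z m" using Suc.prems[of k] Suc.prems[of 0] by auto
  have "z (m + Suc k) / z m = (z (m + k) / z m) * (z (m + k + 1) / z (m + k))"
    using p by (simp add: field_simps)
  then show ?case using IH by (simp add: prod.lessThan_Suc)
qed

lemma ratio_bounds:
  fixes a b e :: real and n m :: nat
  assumes a: "0 < a" and b: "0 \<le> b" and e: "0 < e" "e < a" "b \<le> e"
    and nb: "real n * b \<le> 1" and n8: "8 * real n * b < SS a" and mn: "m < n"
  shows "0 < zz m a b" "SS a - 8 * real n * b \<le> zz (Suc m) a b / zz m a b"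
    "zz (Suc m) a b / zz m a b \<le> (SS a + real n * b * M1 a) * exp (real n * b / 2) *
        exp ((real n + b * (real n)\<^sup>2) * e / (2 * (a - e)))"
proof -
  have mn': "real m \<le> real n" "real (Suc m) \<le> real n" using mn by auto
  have smb: "real (Suc m) * b \<le> 1" using mult_right_mono[OF mn'(2) b] nb by linarith
  have mb: "real m * b \<le> 1" using mult_right_mono[OF mn'(1) b] nb by linarith
  have mbn: "real m * b \<le> real n * b" using mult_right_mono[OF mn'(1) b] .
  have m8: "8 * real m * b < SS a" using mbn n8 by linarith
  show zpos: "0 < zz m a b" by (rule zz_pos[OF a b mb m8])
  have "(SS a - 8 * real n * b) * zz m a b \<le> (SS a - 8 * real m * b) * zz m a b"
    using mbn zpos by (intro mult_right_mono) auto
  also have "\<dots> \<le> zz (Suc m) a b" by (rule zz_lower[OF a b smb])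
  finally show "SS a - 8 * real n * b \<le> zz (Suc m) a b / zz m a b"
    using zpos by (simp add: pos_le_divide_eq)
  define c where "c = sqrt (a / (a - e))"
  have c1: "1 \<le> c" unfolding c_def using e by (simp add: field_simps)
  have cpos: "0 < c" using c1 by simp
  define K where "K = (SS a + real n * b * M1 a)"
  define E where "E = exp (real n * b / 2)"
  define C where "C = exp ((real n + b * (real n)\<^sup>2) * e / (2 * (a - e)))"
  have M1: "0 \<le> M1 a" by (rule M1_nonneg[OF a])
  have S: "0 < SS a" by (rule SS_pos[OF a])
  have K1: "SS a + real m * b * M1 a \<le> K"
    unfolding K_def using mult_right_mono[OF mbn M1] by simp
  have E1: "exp (real m * b\<^sup>2 / (2 * e)) \<le> E"
  proof -
    have bb: "b * b \<le> b * e" using b e by (intro mult_left_mono) auto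
    have "real m * (b * b) \<le> real n * (b * e)"
      using mult_mono[OF mn'(1) bb] by simp
    then have "real m * b\<^sup>2 / (2 * e) \<le> real n * (b * e) / (2 * e)"
      using e by (intro divide_right_mono) (auto simp: power2_eq_square)
    also have "real n * (b * e) / (2 * e) = real n * b / 2" using e by simp
    finally show ?thesis unfolding E_def by simp
  qed
  have C1: "c ^ m * c powr (b * card (pairs m)) \<le> C"
  proof -
    have "c ^ m * c powr (b * card (pairs m)) = c powr (real m + b * card (pairs m))"
      using cpos by (simp add: powr_add powr_realpow)
    also have "\<dots> \<le> c powr (real n + b * (real n)\<^sup>2)"
    proof (rule powr_mono[OF _ c1])
      have "real (card (pairs m)) \<le> real (m * m)" using card_pairs_le[of m] by linarith
      also have "\<dots> \<le> (real n)\<^sup>2" using mn' by (simp add: power2_eq_square mult_mono)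
      finally have "b * card (pairs m) \<le> b * (real n)\<^sup>2" using b by (intro mult_left_mono) auto
      then show "real m + b * card (pairs m) \<le> real n + b * (real n)\<^sup>2" using mn' by linarith
    qed
    also have "\<dots> \<le> C" unfolding c_def C_def
      using cpow_bounds(2)[of e a "real n + b * (real n)\<^sup>2"] e b by auto
    finally show ?thesis .
  qed
  have "zz (Suc m) a b \<le> (SS a + real m * b * M1 a) * exp (real m * b\<^sup>2 / (2 * e)) *
     (c ^ m * c powr (b * card (pairs m))) * zz m a b"
    unfolding c_def by (rule zz_upper[OF e(1,2) b smb])
  also have "\<dots> \<le> K * E * C * zz m a b"
  proof -
    have k0: "0 \<le> SS a + real m * b * M1 a" using S M1 b by simp
    have c0: "0 \<le> c ^ m * c powr (b * card (pairs m))" using cpos by simp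
    have ke: "(SS a + real m * b * M1 a) * exp (real m * b\<^sup>2 / (2 * e)) \<le> K * E"
      by (rule mult_mono[OF K1 E1]) (use k0 K1 in \<open>auto simp: E_def\<close>)
    have ke0: "0 \<le> K * E" using k0 K1 by (simp add: E_def)
    have "(SS a + real m * b * M1 a) * exp (real m * b\<^sup>2 / (2 * e)) * (c ^ m * c powr (b * card (pairs m))) \<le> K * E * C"
      by (rule mult_mono[OF ke C1 ke0 c0])
    then show ?thesis by (rule mult_right_mono) (use zpos in simp)
  qed
  finally show "zz (Suc m) a b / zz m a b \<le> (SS a + real n * b * M1 a) * exp (real n * b / 2) *
        exp ((real n + b * (real n)\<^sup>2) * e / (2 * (a - e)))"
    using zpos unfolding K_def E_def C_def by (simp add: pos_divide_le_eq)
qed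



lemma const_eq:
  fixes \<alpha> :: real assumes "0 < \<alpha>"
  shows "inverse (SS \<alpha> ^ k) = (2 * pi) powr (- real k / 2) * \<alpha> powr (real k / 2)"
proof -
  define y where "y = 2 * pi / \<alpha>"
  have y: "0 < y" using assms by (simp add: y_def)
  have S: "SS \<alpha> = y powr (1 / 2)" unfolding SS_def y_def[symmetric] using y by (simp add: powr_half_sqrt)
  have "SS \<alpha> ^ k = SS \<alpha> powr real k" using SS_pos[OF assms] by (rule powr_realpow[symmetric])
  also have "\<dots> = y powr (1 / 2 * real k)" unfolding S by (rule powr_powr)
  finally have "inverse (SS \<alpha> ^ k) = inverse (y powr (1 / 2 * real k))" by simp
  also have "\<dots> = y powr (- (1 / 2 * real k))" by (rule powr_minus[symmetric])
  also have "\<dots> = (2 * pi) powr (- (1 / 2 * real k)) / \<alpha> powr (- (1 / 2 * real k))"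
    unfolding y_def by (rule powr_divide)
  also have "\<dots> = (2 * pi) powr (- (1 / 2 * real k)) * \<alpha> powr (1 / 2 * real k)"
    unfolding powr_minus[of \<alpha>] by (simp only: divide_inverse inverse_inverse_eq)
  also have "- (1 / 2 * real k) = - real k / 2" by simp
  also have "1 / 2 * real k = real k / 2" by simp
  finally show ?thesis .
qed

lemma invB_lim:
  fixes \<delta> :: "nat \<Rightarrow> real"
  assumes "(\<lambda>n. ln (\<delta> n) / ln (real n)) \<longlonglongrightarrow> 0"
  shows "(\<lambda>n. 1 / (bseq \<delta> n)\<^sup>2) \<longlonglongrightarrow> 0"
proof -
  define q where "q n = (ln (ln (real n)) + 2 * ln (\<delta> n) + ln (4 * pi)) / (4 * ln (real n))" for n
  have lnN: "filterlim (\<lambda>n. ln (real n)) at_top sequentially"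
    by (rule filterlim_compose[OF ln_at_top filterlim_real_sequentially])
  have q_eq: "q n = ln (ln (real n)) / ln (real n) / 4 + (ln (\<delta> n) / ln (real n)) / 2 + ln (4 * pi) * inverse (ln (real n)) / 4" for n
    unfolding q_def by (simp add: field_simps add_divide_distrib)
  have l1: "(\<lambda>n. ln (ln (real n)) / ln (real n)) \<longlonglongrightarrow> 0"
    by (rule filterlim_compose[OF ln_x_over_x_tendsto_0 lnN])
  have l2: "(\<lambda>n. inverse (ln (real n))) \<longlonglongrightarrow> 0" by (rule tendsto_inverse_0_at_top[OF lnN])
  have "q \<longlonglongrightarrow> 0 / 4 + 0 / 2 + ln (4 * pi) * 0 / 4"
    unfolding q_eq[abs_def] by (intro tendsto_intros l1 assms l2) auto
  then have q0: "q \<longlonglongrightarrow> 0" by simp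
  have l3: "(\<lambda>n. 1 / (2 * ln (real n))) \<longlonglongrightarrow> 0"
  proof -
    have "(\<lambda>n. (1 / 2) * inverse (ln (real n))) \<longlonglongrightarrow> (1 / 2) * 0" by (intro tendsto_intros l2)
    then show ?thesis by (simp add: field_simps)
  qed
  have lim: "(\<lambda>n. 1 / (2 * ln (real n)) * (1 / (1 - q n)\<^sup>2)) \<longlonglongrightarrow> 0 * (1 / (1 - 0)\<^sup>2)"
    by (intro tendsto_intros l3 q0) auto
  have ev: "eventually (\<lambda>n. 1 / (2 * ln (real n)) * (1 / (1 - q n)\<^sup>2) = 1 / (bseq \<delta> n)\<^sup>2) sequentially"
    using eventually_ge_at_top[of 3]
  proof eventually_elim
    case (elim n)
    define L where "L = ln (real n)"
    have L: "0 < L" unfolding L_def using elim by simp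
    define s where "s = sqrt (2 * L)"
    have s: "0 < s" "s\<^sup>2 = 2 * L" using L by (auto simp: s_def)
    define X where "X = ln (ln (real n)) + 2 * ln (\<delta> n) + ln (4 * pi)"
    have qn: "q n = X / (4 * L)" unfolding q_def X_def L_def by simp
    have B: "bseq \<delta> n = s * (1 - q n)"
    proof -
      have "bseq \<delta> n = s - X / (2 * s)" unfolding bseq_def s_def X_def L_def by simp
      also have "X / (2 * s) = s * (X / (4 * L))"
        using s L by (simp add: field_simps power2_eq_square)
      finally show ?thesis unfolding qn by (simp add: algebra_simps)
    qed
    have "(bseq \<delta> n)\<^sup>2 = 2 * L * (1 - q n)\<^sup>2" unfolding B power_mult_distrib s(2) ..
    then show ?case unfolding L_def by (simp add: field_simps)
  qed
  show ?thesis using Lim_transform_eventually[OF lim ev] by simp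
qed



lemma beta_lim:
  fixes \<beta> :: "nat \<Rightarrow> real"
  assumes u: "(\<lambda>n. real n * \<beta> n) \<longlonglongrightarrow> 0"
  shows "\<beta> \<longlonglongrightarrow> 0"
proof -
  have i: "(\<lambda>n. inverse (real n)) \<longlonglongrightarrow> 0"
    by (rule tendsto_inverse_0_at_top[OF filterlim_real_sequentially])
  have "(\<lambda>n. real n * \<beta> n * inverse (real n)) \<longlonglongrightarrow> 0 * 0" by (intro tendsto_intros u i)
  moreover have "eventually (\<lambda>n. real n * \<beta> n * inverse (real n) = \<beta> n) sequentially"
    using eventually_ge_at_top[of 1] by eventually_elim auto
  ultimately show ?thesis using Lim_transform_eventually by fastforce
qed

lemma card_pairs_bound:
  fixes b :: real
  assumes "0 \<le> b" "m \<le> n"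
  shows "real m + b * card (pairs m) \<le> real n + b * (real n)\<^sup>2"
proof -
  have "real (card (pairs m)) \<le> real (m * m)" using card_pairs_le[of m] by linarith
  also have "\<dots> \<le> (real n)\<^sup>2" using assms by (simp add: power2_eq_square mult_mono)
  finally have "b * card (pairs m) \<le> b * (real n)\<^sup>2" using assms by (intro mult_left_mono) auto
  then show ?thesis using assms by linarith
qed

lemma part1:
  fixes k :: nat and \<alpha> :: real and \<beta> :: "nat \<Rightarrow> real"
  assumes \<alpha>: "0 < \<alpha>" and \<beta>: "\<And>n. 0 \<le> \<beta> n" and u: "(\<lambda>n. real n * \<beta> n) \<longlonglongrightarrow> 0"
  shows "(\<lambda>n. zz n \<alpha> (\<beta> n) / zz (n - k) \<alpha> (\<beta> n)) \<longlonglongrightarrow> SS \<alpha> ^ k"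
proof -
  define u where "u n = real n * \<beta> n" for n
  have u0: "u \<longlonglongrightarrow> 0" using u unfolding u_def[abs_def] .
  have \<beta>0: "\<beta> \<longlonglongrightarrow> 0" by (rule beta_lim[OF u])
  define e where "e n = \<beta> n + (inverse (real (Suc n)))\<^sup>2" for n
  have e0: "e \<longlonglongrightarrow> 0"
    using tendsto_add[OF \<beta>0 tendsto_power[OF LIMSEQ_inverse_real_of_nat, of 2]] unfolding e_def[abs_def] by simp
  have epos: "0 < e n" for n unfolding e_def using \<beta>[of n] by (simp add: add_nonneg_pos)
  have ble: "\<beta> n \<le> e n" for n unfolding e_def by simp
  define v where "v n = real n * e n" for n
  have v_eq: "v n = u n + (real n / real (Suc n)) * inverse (real (Suc n))" for n
    unfolding v_def e_def u_def by (simp add: field_simps power2_eq_square)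
  have v0: "v \<longlonglongrightarrow> 0"
  proof -
    have "(\<lambda>n. u n + (real n / real (Suc n)) * inverse (real (Suc n))) \<longlonglongrightarrow> 0 + 1 * 0"
      by (intro tendsto_intros u0 LIMSEQ_n_over_Suc_n LIMSEQ_inverse_real_of_nat)
    then show ?thesis unfolding v_eq[abs_def] by simp
  qed
  define Lo where "Lo n = SS \<alpha> - 8 * u n" for n
  define Up where "Up n = (SS \<alpha> + u n * M1 \<alpha>) * exp (u n / 2) * exp ((v n + u n * v n) / (2 * (\<alpha> - e n)))" for n
  have Lo_lim: "(\<lambda>n. Lo n ^ k) \<longlonglongrightarrow> SS \<alpha> ^ k"
  proof -
    have "Lo \<longlonglongrightarrow> SS \<alpha> - 8 * 0" unfolding Lo_def[abs_def] by (intro tendsto_intros u0)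
    then show ?thesis by (intro tendsto_intros) simp
  qed
  have Up_lim: "(\<lambda>n. Up n ^ k) \<longlonglongrightarrow> SS \<alpha> ^ k"
  proof -
    have "Up \<longlonglongrightarrow> (SS \<alpha> + 0 * M1 \<alpha>) * exp (0 / 2) * exp ((0 + 0 * 0) / (2 * (\<alpha> - 0)))"
      unfolding Up_def[abs_def] using \<alpha> by (intro tendsto_intros u0 v0 e0) auto
    then show ?thesis by (intro tendsto_intros) simp
  qed
  have S: "0 < SS \<alpha>" by (rule SS_pos[OF \<alpha>])
  have EV: "eventually (\<lambda>n. k \<le> n \<and> u n < 1 \<and> u n < SS \<alpha> / 8 \<and> e n < \<alpha>) sequentially"
  proof -
    have ev1: "eventually (\<lambda>n. u n < 1) sequentially" by (rule order_tendstoD(2)[OF u0]) simp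
    have ev2: "eventually (\<lambda>n. u n < SS \<alpha> / 8) sequentially" by (rule order_tendstoD(2)[OF u0]) (use S in simp)
    have ev3: "eventually (\<lambda>n. e n < \<alpha>) sequentially" by (rule order_tendstoD(2)[OF e0 \<alpha>])
    show ?thesis using eventually_ge_at_top[of k] ev1 ev2 ev3 by eventually_elim auto
  qed
  have bounds: "eventually (\<lambda>n. Lo n ^ k \<le> zz n \<alpha> (\<beta> n) / zz (n - k) \<alpha> (\<beta> n) \<and>
      zz n \<alpha> (\<beta> n) / zz (n - k) \<alpha> (\<beta> n) \<le> Up n ^ k) sequentially"
    using EV
  proof eventually_elim
    case (elim n)
    define b where "b = \<beta> n"
    have b: "0 \<le> b" unfolding b_def by (rule \<beta>)
    have nb: "real n * b \<le> 1" using elim unfolding u_def b_def by simp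
    have n8: "8 * real n * b < SS \<alpha>" using elim unfolding u_def b_def by simp
    have e1: "0 < e n" "e n < \<alpha>" "b \<le> e n" using epos elim ble unfolding b_def by auto
    note RB = ratio_bounds[OF \<alpha> b e1 nb n8]
    have Up_eq: "(SS \<alpha> + real n * b * M1 \<alpha>) * exp (real n * b / 2) *
        exp ((real n + b * (real n)\<^sup>2) * e n / (2 * (\<alpha> - e n))) = Up n"
    proof -
      have "(real n + b * (real n)\<^sup>2) * e n = v n + u n * v n"
        unfolding u_def v_def b_def by (simp add: algebra_simps power2_eq_square)
      then show ?thesis unfolding Up_def u_def b_def by simp
    qed
    define z where "z m = zz m \<alpha> b" for m
    have zpos: "0 < z m" if "m \<le> n" for m
    proof (cases "m < n")
      case True
      then show ?thesis unfolding z_def by (rule RB(1))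
    next
      case False
      with that have "m = n" by simp
      then show ?thesis unfolding z_def using zz_pos[OF \<alpha> b nb n8] by simp
    qed
    have tel: "z (n - k + k) / z (n - k) = (\<Prod>j<k. z (n - k + j + 1) / z (n - k + j))"
      by (rule telescope) (use elim zpos in auto)
    have nk: "n - k + k = n" using elim by simp
    have rb: "Lo n \<le> z (n - k + j + 1) / z (n - k + j) \<and> z (n - k + j + 1) / z (n - k + j) \<le> Up n" if "j < k" for j
    proof -
      have mn: "n - k + j < n" using that elim by linarith
      have "SS \<alpha> - 8 * real n * b \<le> zz (Suc (n - k + j)) \<alpha> b / zz (n - k + j) \<alpha> b" by (rule RB(2)[OF mn])
      moreover have "zz (Suc (n - k + j)) \<alpha> b / zz (n - k + j) \<alpha> b \<le> Up n"
        using RB(3)[OF mn] unfolding Up_eq .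
      ultimately show ?thesis unfolding z_def Lo_def u_def b_def by simp
    qed
    have Lo0: "0 \<le> Lo n" using elim unfolding Lo_def by simp
    have "Lo n ^ k = (\<Prod>j<k. Lo n)" by simp
    also have "\<dots> \<le> (\<Prod>j<k. z (n - k + j + 1) / z (n - k + j))"
      using rb Lo0 by (intro prod_mono) auto
    finally have L: "Lo n ^ k \<le> z n / z (n - k)" using tel nk by simp
    have "(\<Prod>j<k. z (n - k + j + 1) / z (n - k + j)) \<le> (\<Prod>j<k. Up n)"
    proof (rule prod_mono)
      fix j assume "j \<in> {..<k}"
      then have j: "j < k" by simp
      have "0 < z (n - k + j + 1)" "0 < z (n - k + j)" using zpos elim j by auto
      then show "0 \<le> z (n - k + j + 1) / z (n - k + j) \<and> z (n - k + j + 1) / z (n - k + j) \<le> Up n"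
        using rb[OF j] by auto
    qed
    then have U: "z n / z (n - k) \<le> Up n ^ k" using tel nk by simp
    show ?case using L U unfolding z_def b_def by simp
  qed
  show ?thesis
    by (rule tendsto_sandwich[OF _ _ Lo_lim Up_lim]) (use bounds in \<open>auto elim: eventually_mono\<close>)
qed

lemma part2:
  fixes k :: nat and \<alpha> :: real and \<beta> \<delta> :: "nat \<Rightarrow> real"
  assumes \<alpha>: "0 < \<alpha>" and \<beta>: "\<And>n. 0 \<le> \<beta> n" and u: "(\<lambda>n. real n * \<beta> n) \<longlonglongrightarrow> 0"
    and \<delta>: "(\<lambda>n. ln (\<delta> n) / ln (real n)) \<longlonglongrightarrow> 0"
  shows "(\<lambda>n. zz (n - k) (\<alpha> - real k * \<beta> n / (4 * (bseq \<delta> n)\<^sup>2)) (\<beta> n) / zz (n - k) \<alpha> (\<beta> n)) \<longlonglongrightarrow> 1"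
proof -
  define u where "u n = real n * \<beta> n" for n
  have u0: "u \<longlonglongrightarrow> 0" using u unfolding u_def[abs_def] .
  have \<beta>0: "\<beta> \<longlonglongrightarrow> 0" by (rule beta_lim[OF u])
  have iB: "(\<lambda>n. 1 / (bseq \<delta> n)\<^sup>2) \<longlonglongrightarrow> 0" by (rule invB_lim[OF \<delta>])
  define \<epsilon> where "\<epsilon> n = real k * \<beta> n / (4 * (bseq \<delta> n)\<^sup>2)" for n
  have \<epsilon>_eq: "\<epsilon> n = real k / 4 * \<beta> n * (1 / (bseq \<delta> n)\<^sup>2)" for n unfolding \<epsilon>_def by simp
  have \<epsilon>0: "\<epsilon> \<longlonglongrightarrow> 0"
  proof -
    have "(\<lambda>n. real k / 4 * \<beta> n * (1 / (bseq \<delta> n)\<^sup>2)) \<longlonglongrightarrow> real k / 4 * 0 * 0"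
      by (intro tendsto_intros \<beta>0 iB)
    then show ?thesis unfolding \<epsilon>_eq[abs_def] by simp
  qed
  have \<epsilon>nn: "0 \<le> \<epsilon> n" for n unfolding \<epsilon>_def using \<beta>[of n] by simp
  define w where "w n = real n * \<epsilon> n" for n
  have w0: "w \<longlonglongrightarrow> 0"
  proof -
    have lim: "(\<lambda>n. real k / 4 * u n * (1 / (bseq \<delta> n)\<^sup>2)) \<longlonglongrightarrow> real k / 4 * 0 * 0"
      by (intro tendsto_intros u0 iB)
    have weq: "w = (\<lambda>n. real k / 4 * u n * (1 / (bseq \<delta> n)\<^sup>2))"
      unfolding w_def \<epsilon>_eq u_def by (simp add: fun_eq_iff)
    show ?thesis unfolding weq using lim by simp
  qed
  define Up where "Up n = exp ((w n + u n * w n) / (2 * (\<alpha> - \<epsilon> n)))" for n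
  have Up_lim: "Up \<longlonglongrightarrow> 1"
  proof -
    have "Up \<longlonglongrightarrow> exp ((0 + 0 * 0) / (2 * (\<alpha> - 0)))"
      unfolding Up_def[abs_def] using \<alpha> by (intro tendsto_intros u0 w0 \<epsilon>0) auto
    then show ?thesis by simp
  qed
  have S: "0 < SS \<alpha>" by (rule SS_pos[OF \<alpha>])
  have EV: "eventually (\<lambda>n. k \<le> n \<and> u n < 1 \<and> u n < SS \<alpha> / 8 \<and> \<epsilon> n < \<alpha>) sequentially"
  proof -
    have ev1: "eventually (\<lambda>n. u n < 1) sequentially" by (rule order_tendstoD(2)[OF u0]) simp
    have ev2: "eventually (\<lambda>n. u n < SS \<alpha> / 8) sequentially" by (rule order_tendstoD(2)[OF u0]) (use S in simp)
    have ev3: "eventually (\<lambda>n. \<epsilon> n < \<alpha>) sequentially" by (rule order_tendstoD(2)[OF \<epsilon>0 \<alpha>])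
    show ?thesis using eventually_ge_at_top[of k] ev1 ev2 ev3 by eventually_elim auto
  qed
  have bounds: "eventually (\<lambda>n. 1 \<le> zz (n - k) (\<alpha> - \<epsilon> n) (\<beta> n) / zz (n - k) \<alpha> (\<beta> n) \<and>
      zz (n - k) (\<alpha> - \<epsilon> n) (\<beta> n) / zz (n - k) \<alpha> (\<beta> n) \<le> Up n) sequentially"
    using EV
  proof eventually_elim
    case (elim n)
    define b where "b = \<beta> n"
    define m where "m = n - k"
    define ep where "ep = \<epsilon> n"
    have b: "0 \<le> b" unfolding b_def by (rule \<beta>)
    have ep: "0 \<le> ep" "ep < \<alpha>" using \<epsilon>nn elim unfolding ep_def by auto
    have mn: "m \<le> n" unfolding m_def by simp
    have mb: "real m * b \<le> 1"
      using mult_right_mono[of "real m" "real n" b] mn b elim unfolding u_def b_def by auto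
    have m8: "8 * real m * b < SS \<alpha>"
      using mult_right_mono[of "real m" "real n" b] mn b elim unfolding u_def b_def by auto
    have zpos: "0 < zz m \<alpha> b" by (rule zz_pos[OF \<alpha> b mb m8])
    define c where "c = sqrt (\<alpha> / (\<alpha> - ep))"
    have c: "0 < c" using ep \<alpha> by (simp add: c_def)
    have cc: "(\<alpha> - ep) * c\<^sup>2 = \<alpha>" using ep \<alpha> by (simp add: c_def)
    define C where "C = c ^ m * c powr (b * card (pairs m))"
    have C0: "0 \<le> C" unfolding C_def using c by simp
    have "NN m (\<alpha> - ep) b = ennreal C * NN m \<alpha> b"
      using NN_scale[OF c, of m "\<alpha> - ep" b] unfolding cc C_def .
    then have zeq: "zz m (\<alpha> - ep) b = C * zz m \<alpha> b"
      unfolding zz_def using C0 by (simp add: enn2real_mult)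
    have ratio: "zz m (\<alpha> - ep) b / zz m \<alpha> b = C" using zpos unfolding zeq by simp
    have Cp: "C = c powr (real m + b * card (pairs m))"
      unfolding C_def using c by (simp add: powr_add powr_realpow)
    have X0: "0 \<le> real m + b * card (pairs m)" using b by simp
    have C1: "1 \<le> C" unfolding Cp c_def by (rule cpow_bounds(1)[OF ep X0])
    have "C \<le> exp ((real m + b * card (pairs m)) * ep / (2 * (\<alpha> - ep)))"
      unfolding Cp c_def by (rule cpow_bounds(2)[OF ep X0])
    also have "\<dots> \<le> exp ((real n + b * (real n)\<^sup>2) * ep / (2 * (\<alpha> - ep)))"
    proof -
      have "(real m + b * card (pairs m)) * ep \<le> (real n + b * (real n)\<^sup>2) * ep"
        using card_pairs_bound[OF b mn] ep by (intro mult_right_mono) auto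
      then show ?thesis using ep by (simp add: divide_right_mono)
    qed
    also have "(real n + b * (real n)\<^sup>2) * ep = w n + u n * w n"
      unfolding w_def u_def b_def ep_def by (simp add: algebra_simps power2_eq_square)
    finally have C2: "C \<le> Up n" unfolding Up_def ep_def .
    show ?case using C1 C2 ratio unfolding m_def b_def ep_def by simp
  qed
  have "(\<lambda>n. zz (n - k) (\<alpha> - \<epsilon> n) (\<beta> n) / zz (n - k) \<alpha> (\<beta> n)) \<longlonglongrightarrow> 1"
    by (rule tendsto_sandwich[OF _ _ tendsto_const Up_lim]) (use bounds in \<open>auto elim: eventually_mono\<close>)
  then show ?thesis unfolding \<epsilon>_def .
qed

theorem lemma2p4:
  fixes k :: nat and \<alpha> :: real and \<beta> \<delta> :: "nat \<Rightarrow> real"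
  assumes "1 \<le> k" and "0 < \<alpha>"
    and "\<And>n. 0 \<le> \<beta> n"
    and "(\<lambda>n. real n * \<beta> n) \<longlonglongrightarrow> 0"
    and "\<And>n. 0 < \<delta> n"
    and "(\<lambda>n. ln (\<delta> n) / ln (real n)) \<longlonglongrightarrow> 0"
  shows "((\<lambda>n. Zpart (n - k) \<alpha> (\<beta> n) / Zpart n \<alpha> (\<beta> n))
           \<longlonglongrightarrow> (2 * pi) powr (- real k / 2) * \<alpha> powr (real k / 2))
    \<and> ((\<lambda>n. Zpart (n - k) (\<alpha> - real k * \<beta> n / (4 * (bseq \<delta> n)\<^sup>2)) (\<beta> n)
               / Zpart (n - k) \<alpha> (\<beta> n)) \<longlonglongrightarrow> 1)"
proof
  have Z: "Zpart m a b = zz m a b" for m a b unfolding Zpart_NN zz_def ..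
  have "(\<lambda>n. inverse (zz n \<alpha> (\<beta> n) / zz (n - k) \<alpha> (\<beta> n))) \<longlonglongrightarrow> inverse (SS \<alpha> ^ k)"
    by (rule tendsto_inverse[OF part1[OF assms(2,3,4)]]) (use SS_pos[OF assms(2)] in simp)
  then show "(\<lambda>n. Zpart (n - k) \<alpha> (\<beta> n) / Zpart n \<alpha> (\<beta> n))
           \<longlonglongrightarrow> (2 * pi) powr (- real k / 2) * \<alpha> powr (real k / 2)"
    unfolding Z const_eq[OF assms(2)] by simp
  show "(\<lambda>n. Zpart (n - k) (\<alpha> - real k * \<beta> n / (4 * (bseq \<delta> n)\<^sup>2)) (\<beta> n)
               / Zpart (n - k) \<alpha> (\<beta> n)) \<longlonglongrightarrow> 1"
    unfolding Z by (rule part2[OF assms(2,3,4,6)])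
qed


end
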